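(* Let $b$ be a graph over a countable set $X$ and let $x,y,z\in X$. The following statements are equivalent: (i) $R(x,z)=R(x,y)+R(y,z)$. (ii) All paths from $x$ to $z$ (in the graph $b$) pass through $y$.
   Context: A graph over a countable set $X$ is a symmetric map $b:X\times X\to[0,\infty)$ with $b(x,x)=0$ for all $x$ and $\sum_{y\in X}b(x,y)<\infty$ for every $x\in X$. A path in $b$ from $x$ to $z$ is a sequence of distinct vertices $(x_0,\dots,x_n)$ with $x_0=x$, $x_n=z$ and $b(x_{i-1},x_i)>0$ for all $i$. For $f:X\to\mathbb R$ let $Q(f):=\frac12\sum_{x,y\in X}b(x,y)(f(x)-f(y))^2\in[0,\infty]$. The resistance metric is $R(x,y):=\sup\{(f(y)-f(x))^2\mid f:X\to\mathbb R,\ Q(f)=1\}$. *)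

theory Defs
  imports "HOL-Analysis.Analysis"
begin

definition is_graph :: "('a::countable \<Rightarrow> 'a \<Rightarrow> real) \<Rightarrow> bool" where
  "is_graph b \<longleftrightarrow> (\<forall>x y. b x y = b y x) \<and> (\<forall>x y. 0 \<le> b x y) \<and> (\<forall>x. b x x = 0)
     \<and> (\<forall>x. (\<lambda>y. b x y) summable_on UNIV)"

definition is_path :: "('a \<Rightarrow> 'a \<Rightarrow> real) \<Rightarrow> 'a \<Rightarrow> 'a \<Rightarrow> 'a list \<Rightarrow> bool" where
  "is_path b x z p \<longleftrightarrow> p \<noteq> [] \<and> hd p = x \<and> last p = z \<and> distinct p
     \<and> (\<forall>i. Suc i < length p \<longrightarrow> 0 < b (p ! i) (p ! Suc i))"

definition energy :: "('a \<Rightarrow> 'a \<Rightarrow> real) \<Rightarrow> ('a \<Rightarrow> real) \<Rightarrow> ennreal" where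
  "energy b f = (\<Sum>\<^sub>\<infinity>(x, y)\<in>UNIV. ennreal (b x y * (f x - f y)\<^sup>2)) / 2"

definition resistance :: "('a \<Rightarrow> 'a \<Rightarrow> real) \<Rightarrow> 'a \<Rightarrow> 'a \<Rightarrow> ennreal" where
  "resistance b x y = (SUP f \<in> {f. energy b f = 1}. ennreal ((f y - f x)\<^sup>2))"

end

theory Submission
  imports Defs
begin


lemma summable_ennreal[simp]: "(f::_ \<Rightarrow> ennreal) summable_on S"
  by (simp add: nonneg_summable_on_complete)

lemma infsum_cmult_ennreal:
  fixes f :: "'b \<Rightarrow> ennreal"
  shows "(\<Sum>\<^sub>\<infinity>x\<in>A. c * f x) = c * infsum f A"
proof -
  have "(\<Sum>\<^sub>\<infinity>x\<in>A. c * f x) = (SUP F\<in>{F. finite F \<and> F\<subseteq>A}. sum (\<lambda>x. c * f x) F)"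
    by (rule nonneg_infsum_complete) simp
  also have "\<dots> = (SUP F\<in>{F. finite F \<and> F\<subseteq>A}. c * sum f F)"
    by (simp add: sum_distrib_left)
  also have "\<dots> = c * (SUP F\<in>{F. finite F \<and> F\<subseteq>A}. sum f F)"
    by (simp add: SUP_mult_left_ennreal)
  also have "\<dots> = c * infsum f A"
    by (subst nonneg_infsum_complete[of A f]) simp_all
  finally show ?thesis .
qed

lemma infsum_add_ennreal:
  fixes f g :: "'b \<Rightarrow> ennreal"
  shows "(\<Sum>\<^sub>\<infinity>x\<in>A. f x + g x) = infsum f A + infsum g A"
  by (rule infsum_add) simp_all

lemma ennreal_infsum_real:
  fixes f :: "'b \<Rightarrow> real"
  assumes "f summable_on A" "\<And>x. x \<in> A \<Longrightarrow> 0 \<le> f x"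
  shows "(\<Sum>\<^sub>\<infinity>x\<in>A. ennreal (f x)) = ennreal (infsum f A)"
proof -
  have "ennreal (infsum f A) = infsum (ennreal \<circ> f) A"
    by (rule infsum_comm_additive_general[symmetric])
       (auto simp: assms sum_ennreal comp_def intro!: sum_ennreal)
  then show ?thesis by (simp add: comp_def)
qed

lemma infsum_single_le_ennreal:
  fixes f :: "'b \<Rightarrow> ennreal"
  assumes "x \<in> A" shows "f x \<le> infsum f A"
proof -
  have "infsum f {x} \<le> infsum f A"
    by (rule infsum_mono_neutral) (use assms in auto)
  then show ?thesis by simp
qed

lemma infsum_single_le_real:
  fixes f :: "'b \<Rightarrow> real"
  assumes "x \<in> A" "f summable_on A" "\<And>y. y \<in> A \<Longrightarrow> 0 \<le> f y" shows "f x \<le> infsum f A"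
proof -
  have "infsum f {x} \<le> infsum f A"
    by (rule infsum_mono_neutral) (use assms in auto)
  then show ?thesis by simp
qed

locale rgraph =
  fixes b :: "'a::countable \<Rightarrow> 'a \<Rightarrow> real"
  assumes G: "is_graph b" and edge: "\<exists>u v. 0 < b u v"
begin

lemma bsym: "b u v = b v u" using G unfolding is_graph_def by blast
lemma bnn: "0 \<le> b u v" using G unfolding is_graph_def by blast
lemma bdiag[simp]: "b u u = 0" using G unfolding is_graph_def by blast
lemma bsumm: "(\<lambda>v. b u v) summable_on UNIV" using G unfolding is_graph_def by blast

definition T :: "('a \<Rightarrow> real) \<Rightarrow> ennreal" where
  "T f = (\<Sum>\<^sub>\<infinity>p\<in>UNIV. ennreal (b (fst p) (snd p) * (f (fst p) - f (snd p))\<^sup>2))"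

abbreviation E where "E f \<equiv> energy b f"

lemma E_T: "E f = T f / 2" unfolding energy_def T_def case_prod_unfold ..

lemma T_mono:
  assumes "\<And>u v. b u v * (f u - f v)^2 \<le> b u v * (g u - g v)^2"
  shows "T f \<le> T g"
  unfolding T_def by (rule infsum_mono) (auto simp: assms ennreal_leI)

lemma T_comb_le:
  assumes "0 \<le> \<alpha>" "0 \<le> \<beta>"
  and "\<And>u v. b u v * (h u - h v)^2 \<le> \<alpha>*(b u v * (f u - f v)^2) + \<beta>*(b u v * (g u - g v)^2)"
  shows "T h \<le> ennreal \<alpha> * T f + ennreal \<beta> * T g"
proof -
  have "T h \<le> (\<Sum>\<^sub>\<infinity>p\<in>UNIV. ennreal \<alpha> * ennreal (b (fst p) (snd p) * (f (fst p) - f (snd p))\<^sup>2)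
        + ennreal \<beta> * ennreal (b (fst p) (snd p) * (g (fst p) - g (snd p))\<^sup>2))"
    unfolding T_def
  proof (rule infsum_mono, simp, simp, clarify)
    fix u v
    have "ennreal (b u v * (h u - h v)^2) \<le> ennreal (\<alpha>*(b u v * (f u - f v)^2) + \<beta>*(b u v * (g u - g v)^2))"
      using assms(3) by (rule ennreal_leI)
    also have "\<dots> = ennreal \<alpha> * ennreal (b u v * (f u - f v)\<^sup>2) + ennreal \<beta> * ennreal (b u v * (g u - g v)\<^sup>2)"
      using assms(1,2) bnn[of u v] by (simp add: ennreal_plus ennreal_mult)
    finally show "ennreal (b u v * (h u - h v)^2) \<le> ennreal \<alpha> * ennreal (b u v * (f u - f v)\<^sup>2) + ennreal \<beta> * ennreal (b u v * (g u - g v)\<^sup>2)" .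
  qed
  also have "\<dots> = ennreal \<alpha> * T f + ennreal \<beta> * T g"
    unfolding T_def
    by (simp add: infsum_add_ennreal infsum_cmult_ennreal)
  finally show ?thesis .
qed

lemma T_add_le:
  assumes "\<And>u v. b u v * (g1 u - g1 v)^2 + b u v * (g2 u - g2 v)^2 \<le> b u v * (f u - f v)^2"
  shows "T g1 + T g2 \<le> T f"
proof -
  have "T g1 + T g2 = (\<Sum>\<^sub>\<infinity>p\<in>UNIV. ennreal (b (fst p) (snd p) * (g1 (fst p) - g1 (snd p))^2) + ennreal (b (fst p) (snd p) * (g2 (fst p) - g2 (snd p))^2))"
    unfolding T_def by (simp add: infsum_add_ennreal)
  also have "\<dots> \<le> T f"
    unfolding T_def
  proof (rule infsum_mono, simp, simp, clarify)
    fix u v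
    have "ennreal (b u v * (g1 u - g1 v)^2) + ennreal (b u v * (g2 u - g2 v)^2)
       = ennreal (b u v * (g1 u - g1 v)^2 + b u v * (g2 u - g2 v)^2)"
      using bnn[of u v] by (simp add: ennreal_plus)
    also have "\<dots> \<le> ennreal (b u v * (f u - f v)^2)" using assms by (rule ennreal_leI)
    finally show "ennreal (b u v * (g1 u - g1 v)^2) + ennreal (b u v * (g2 u - g2 v)^2) \<le> ennreal (b u v * (f u - f v)^2)" .
  qed
  finally show ?thesis .
qed

lemma T_scale: "T (\<lambda>v. c * f v + k) = ennreal (c^2) * T f"
proof -
  have "T (\<lambda>v. c * f v + k) = (\<Sum>\<^sub>\<infinity>p\<in>UNIV. ennreal (c^2) * ennreal (b (fst p) (snd p) * (f (fst p) - f (snd p))\<^sup>2))"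
    unfolding T_def
  proof (rule infsum_cong)
    fix p :: "'a \<times> 'a"
    obtain x y where p: "p = (x, y)" by (cases p)
    have "b x y * (c * f x + k - (c * f y + k))\<^sup>2 = c^2 * (b x y * (f x - f y)\<^sup>2)"
      by (simp add: power2_eq_square algebra_simps)
    then show "ennreal (b (fst p) (snd p) * (c * f (fst p) + k - (c * f (snd p) + k))\<^sup>2) = ennreal (c\<^sup>2) * ennreal (b (fst p) (snd p) * (f (fst p) - f (snd p))\<^sup>2)"
      by (simp add: ennreal_mult[symmetric] bnn p)
  qed
  also have "\<dots> = ennreal (c^2) * T f"
    unfolding T_def by (simp add: infsum_cmult_ennreal)
  finally show ?thesis .
qed

lemma E_scale: "E (\<lambda>v. c * f v + k) = ennreal (c^2) * E f"
  unfolding E_T T_scale by (simp add: ennreal_times_divide)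

lemma E_add_le:
  assumes "\<And>u v. b u v * (g1 u - g1 v)^2 + b u v * (g2 u - g2 v)^2 \<le> b u v * (f u - f v)^2"
  shows "E g1 + E g2 \<le> E f"
  unfolding E_T add_divide_distrib_ennreal[symmetric]
  by (rule divide_right_mono_ennreal) (rule T_add_le[OF assms])

lemma E_comb_le:
  assumes "0 \<le> \<alpha>" "0 \<le> \<beta>"
  and "\<And>u v. b u v * (h u - h v)^2 \<le> \<alpha>*(b u v * (f u - f v)^2) + \<beta>*(b u v * (g u - g v)^2)"
  shows "E h \<le> ennreal \<alpha> * E f + ennreal \<beta> * E g"
  unfolding E_T ennreal_times_divide add_divide_distrib_ennreal[symmetric]
  by (rule divide_right_mono_ennreal) (rule T_comb_le[OF assms])

lemma E_mono:
  assumes "\<And>u v. b u v * (f u - f v)^2 \<le> b u v * (g u - g v)^2"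
  shows "E f \<le> E g"
  unfolding E_T by (rule divide_right_mono_ennreal) (rule T_mono[OF assms])

definition NSe :: "('a \<Rightarrow> real) \<Rightarrow> 'a \<Rightarrow> ennreal" where
  "NSe g u = (\<Sum>\<^sub>\<infinity>w\<in>UNIV. ennreal (b u w * (g u - g w)\<^sup>2))"

definition TN :: "('a \<Rightarrow> real) \<Rightarrow> 'a \<Rightarrow> ennreal" where
  "TN g u = (\<Sum>\<^sub>\<infinity>p\<in>{p. fst p \<noteq> u \<and> snd p \<noteq> u}. ennreal (b (fst p) (snd p) * (g (fst p) - g (snd p))\<^sup>2))"

lemma T_split: "T g = TN g u + 2 * NSe g u"
proof -
  define tm where "tm p = ennreal (b (fst p) (snd p) * (g (fst p) - g (snd p))\<^sup>2)" for p
  define N where "N = {p::'a\<times>'a. fst p \<noteq> u \<and> snd p \<noteq> u}"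
  define U1 where "U1 = Pair u ` (UNIV::'a set)"
  define U2 where "U2 = (\<lambda>a. (a, u)) ` (-{u})"
  have U: "UNIV = N \<union> (U1 \<union> U2)"
    unfolding N_def U1_def U2_def by auto
  have d1: "N \<inter> (U1 \<union> U2) = {}" unfolding N_def U1_def U2_def by auto
  have d2: "U1 \<inter> U2 = {}" unfolding U1_def U2_def by auto
  have "T g = infsum tm UNIV" unfolding T_def tm_def ..
  also have "\<dots> = infsum tm N + (infsum tm U1 + infsum tm U2)"
    unfolding U by (simp add: infsum_Un_disjoint d1 d2)
  also have "infsum tm U1 = NSe g u"
    unfolding U1_def NSe_def by (subst infsum_reindex) (auto simp: tm_def comp_def inj_on_def)
  also have "infsum tm U2 = (\<Sum>\<^sub>\<infinity>a\<in>-{u}. ennreal (b u a * (g u - g a)\<^sup>2))"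
    unfolding U2_def by (subst infsum_reindex) (auto simp: inj_on_def tm_def comp_def bsym[of _ u] power2_commute)
  also have "\<dots> = NSe g u"
    unfolding NSe_def by (rule infsum_cong_neutral) auto
  also have "infsum tm N = TN g u" unfolding TN_def tm_def N_def ..
  finally show ?thesis by (simp add: mult_2)
qed

lemma E_split: "E g = TN g u / 2 + NSe g u"
proof -
  have "E g = TN g u / 2 + 2 * NSe g u / 2"
    by (simp add: E_T T_split[of g u] add_divide_distrib_ennreal)
  also have "2 * NSe g u / 2 = NSe g u"
    by (metis ennreal_times_divide mult.commute mult.right_neutral ennreal_divide_self
          zero_neq_numeral ennreal_numeral_less_top)
  finally show ?thesis .
qed

lemma NSe_le_E: "NSe g u \<le> E g"
  unfolding E_split[of g u] by simp

lemma term_le_E: "ennreal (b u v * (g u - g v)\<^sup>2) \<le> E g"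
proof -
  have "ennreal (b u v * (g u - g v)\<^sup>2) \<le> NSe g u"
    unfolding NSe_def by (rule infsum_single_le_ennreal) simp
  also have "\<dots> \<le> E g" by (rule NSe_le_E)
  finally show ?thesis .
qed

lemma E_zero_edge: assumes "E g = 0" "0 < b u v" shows "g u = g v"
proof -
  have "ennreal (b u v * (g u - g v)\<^sup>2) \<le> 0" using term_le_E[of u v g] assms(1) by simp
  then have "b u v * (g u - g v)\<^sup>2 \<le> 0" by (simp add: ennreal_eq_0_iff)
  then have "(g u - g v)\<^sup>2 \<le> 0" using assms(2)
    by (metis mult_le_0_iff not_le zero_le_power2 le_less_trans less_le_not_le)
  then show ?thesis by simp
qed

lemma E_const_edge:
  assumes "\<And>u v. 0 < b u v \<Longrightarrow> g u = g v"
  shows "E (\<lambda>v. f v + c * g v) = E f"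
  unfolding E_T T_def
proof (rule arg_cong[where f="\<lambda>x. x / 2"], rule infsum_cong)
  fix p :: "'a \<times> 'a"
  show "ennreal (b (fst p) (snd p) * (f (fst p) + c * g (fst p) - (f (snd p) + c * g (snd p)))\<^sup>2)
     = ennreal (b (fst p) (snd p) * (f (fst p) - f (snd p))\<^sup>2)"
    using assms[of "fst p" "snd p"] bnn[of "fst p" "snd p"]
    by (cases "b (fst p) (snd p) = 0") auto
qed

definition deg :: "'a \<Rightarrow> real" where "deg u = (\<Sum>\<^sub>\<infinity>w\<in>UNIV. b u w)"

lemma deg_nn: "0 \<le> deg u" unfolding deg_def by (rule infsum_nonneg) (simp add: bnn)

lemma b_le_deg: "b u v \<le> deg u"
  unfolding deg_def by (rule infsum_single_le_real) (auto simp: bsumm bnn)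

definition delta :: "'a \<Rightarrow> 'a \<Rightarrow> real" where "delta u v = (if v = u then 1 else 0)"

lemma E_delta: "E (delta u) = ennreal (deg u)"
proof -
  have "TN (delta u) u = 0" unfolding TN_def by (rule infsum_0) (auto simp: delta_def)
  moreover have "NSe (delta u) u = ennreal (deg u)"
  proof -
    have "NSe (delta u) u = (\<Sum>\<^sub>\<infinity>w\<in>UNIV. ennreal (b u w))"
      unfolding NSe_def by (rule infsum_cong) (auto simp: delta_def)
    also have "\<dots> = ennreal (deg u)" unfolding deg_def
      by (rule ennreal_infsum_real) (auto simp: bsumm bnn)
    finally show ?thesis .
  qed
  ultimately show ?thesis unfolding E_split[of _ u] by simp
qed

lemma ex_E1: "\<exists>f. E f = 1"
proof -
  obtain u v where uv: "0 < b u v" using edge by blast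
  then have d: "0 < deg u" using b_le_deg[of u v] by linarith
  define f where "f v = (1 / sqrt (deg u)) * delta u v + 0" for v
  have "E f = ennreal ((1 / sqrt (deg u))^2) * E (delta u)"
    unfolding f_def by (rule E_scale)
  also have "\<dots> = 1" using d by (simp add: E_delta ennreal_mult[symmetric] power_divide)
  finally show ?thesis by blast
qed

abbreviation R where "R x y \<equiv> resistance b x y"

lemma R_upper: "E f = 1 \<Longrightarrow> ennreal ((f y - f x)\<^sup>2) \<le> R x y"
  unfolding resistance_def by (rule SUP_upper) simp

lemma R_least: "(\<And>f. E f = 1 \<Longrightarrow> ennreal ((f y - f x)\<^sup>2) \<le> c) \<Longrightarrow> R x y \<le> c"
  unfolding resistance_def by (rule SUP_least) simp

lemma R_refl: "R x x = 0"
  using R_least[of x x 0] by simp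

lemma R1:
  assumes "0 < E g" "E g < \<infinity>"
  shows "ennreal ((g y - g x)\<^sup>2) \<le> R x y * E g"
proof -
  define q where "q = enn2real (E g)"
  have Eq: "E g = ennreal q" using assms(2) unfolding q_def by (simp add: less_top)
  have q: "0 < q" using assms(1) Eq by simp
  define h where "h v = (1 / sqrt q) * g v + 0" for v
  have "E h = ennreal ((1 / sqrt q)^2) * E g" unfolding h_def by (rule E_scale)
  also have "\<dots> = 1" using q Eq by (simp add: ennreal_mult[symmetric] power_divide)
  finally have "ennreal ((h y - h x)\<^sup>2) \<le> R x y" by (rule R_upper)
  moreover have "(h y - h x)\<^sup>2 = (g y - g x)\<^sup>2 / q"
    using q by (simp add: h_def power2_eq_square field_simps)
  ultimately have "ennreal ((g y - g x)\<^sup>2 / q) \<le> R x y" by simp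
  then have "ennreal ((g y - g x)\<^sup>2 / q) * ennreal q \<le> R x y * ennreal q"
    by (rule mult_right_mono) simp
  moreover have "ennreal ((g y - g x)\<^sup>2 / q) * ennreal q = ennreal ((g y - g x)\<^sup>2)"
    using q by (simp add: ennreal_mult[symmetric])
  ultimately show ?thesis using Eq by simp
qed

lemma ennreal_nat_le_top: assumes "\<And>n::nat. ennreal (real n) \<le> r" shows "r = \<infinity>"
proof (rule ccontr)
  assume "r \<noteq> \<infinity>"
  then obtain s where s: "r = ennreal s" "0 \<le> s" by (cases r) auto
  obtain n :: nat where "s < real n" using reals_Archimedean2 by blast
  moreover have "real n \<le> s" using assms[of n] s by (simp add: ennreal_le_iff)
  ultimately show False by simp
qed

lemma R2:
  assumes "E g = 0" "g x \<noteq> g y"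
  shows "R x y = \<infinity>"
proof (rule ennreal_nat_le_top)
  fix n :: nat
  obtain h0 where h0: "E h0 = 1" using ex_E1 by blast
  define d0 where "d0 = h0 y - h0 x"
  define d where "d = g y - g x"
  have d: "d \<noteq> 0" using assms(2) unfolding d_def by simp
  define c where "c = (\<bar>d0\<bar> + real n) / d"
  define h where "h v = h0 v + c * g v" for v
  have "E h = E h0" unfolding h_def by (rule E_const_edge) (rule E_zero_edge[OF assms(1)])
  then have "ennreal ((h y - h x)\<^sup>2) \<le> R x y" using h0 by (intro R_upper) simp
  moreover have "h y - h x = d0 + \<bar>d0\<bar> + real n"
  proof -
    have "c * d = \<bar>d0\<bar> + real n" using d by (simp add: c_def)
    moreover have "h y - h x = d0 + c * d" unfolding h_def d0_def d_def by (simp add: algebra_simps)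
    ultimately show ?thesis by simp
  qed
  moreover have "real n \<le> (d0 + \<bar>d0\<bar> + real n)\<^sup>2"
  proof (cases "n = 0")
    case True then show ?thesis by simp
  next
    case False
    define t where "t = d0 + \<bar>d0\<bar> + real n"
    have t1: "real n \<le> t" unfolding t_def by simp
    have "1 \<le> real n" using False by simp
    then have "1 \<le> t" using t1 by linarith
    then have "t * 1 \<le> t * t" by (intro mult_left_mono) auto
    then show ?thesis using t1 unfolding t_def[symmetric] by (simp add: power2_eq_square)
  qed
  ultimately show "ennreal (real n) \<le> R x y"
    by (metis ennreal_leI order_trans)
qed

lemma R3:
  assumes "R x y < \<infinity>" "E g < \<infinity>"
  shows "(g y - g x)\<^sup>2 \<le> enn2real (R x y) * enn2real (E g)"
proof (cases "E g = 0")
  case True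
  then have "g x = g y" using R2[of g x y] assms(1) by (metis less_irrefl)
  then show ?thesis by simp
next
  case False
  then have "0 < E g" using not_gr_zero by blast
  then have "ennreal ((g y - g x)\<^sup>2) \<le> R x y * E g" by (intro R1) (use assms in auto)
  then have "enn2real (ennreal ((g y - g x)\<^sup>2)) \<le> enn2real (R x y * E g)"
    using assms by (intro enn2real_mono) (auto simp: ennreal_mult_less_top)
  then show ?thesis by (simp add: enn2real_mult)
qed

lemma R_pos: assumes "x \<noteq> y" shows "0 < R x y"
proof (cases "E (delta y) = 0")
  case True
  then show ?thesis using R2[of "delta y" x y] assms by (simp add: delta_def)
next
  case False
  then have "0 < E (delta y)" using not_gr_zero by blast
  then have "ennreal ((delta y y - delta y x)\<^sup>2) \<le> R x y * E (delta y)"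
    by (intro R1) (auto simp: E_delta)
  then have "R x y \<noteq> 0" using assms by (auto simp: delta_def)
  then show ?thesis by (simp add: zero_less_iff_neq_zero)
qed

end



lemma clamp_ineq:
  fixes u s w A B :: real
  assumes "u \<le> s" "s \<le> w"
  shows "(max u (min s A) - max u (min s B))^2 + (max s (min w A) - max s (min w B))^2 \<le> (A - B)^2"
proof -
  define p where "p = max u (min s A) - max u (min s B)"
  define q where "q = max s (min w A) - max s (min w B)"
  have pq: "0 \<le> p * q"
  proof (cases "A \<le> B")
    case True
    then have "p \<le> 0" "q \<le> 0" unfolding p_def q_def by (auto simp: max_def min_def)
    then show ?thesis by (simp add: zero_le_mult_iff)
  next
    case False
    then have "p \<ge> 0" "q \<ge> 0" unfolding p_def q_def by (auto simp: max_def min_def)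
    then show ?thesis by simp
  qed
  have "\<bar>p + q\<bar> \<le> \<bar>A - B\<bar>" unfolding p_def q_def using assms by (auto simp: max_def min_def abs_if)
  then have "(p + q)^2 \<le> (A - B)^2" by (simp add: abs_le_square_iff)
  moreover have "p^2 + q^2 \<le> (p + q)^2" using pq by (simp add: power2_eq_square algebra_simps)
  ultimately show ?thesis unfolding p_def q_def by linarith
qed

lemma cs_aux:
  fixes d1 d2 a c q1 q2 :: real
  assumes "d1^2 \<le> a * q1" "d2^2 \<le> c * q2" "0 \<le> a" "0 \<le> c" "0 \<le> q1" "0 \<le> q2"
  shows "(d1 + d2)^2 \<le> (a + c) * (q1 + q2)"
proof -
  have "(2 * d1 * d2)^2 = 4 * d1^2 * d2^2" by (simp add: power2_eq_square)
  also have "\<dots> \<le> 4 * (a * q1) * (c * q2)"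
    using assms by (intro mult_mono) auto
  also have "\<dots> \<le> (a * q2 + c * q1)^2"
  proof -
    have "0 \<le> (a * q2 - c * q1)^2" by simp
    then show ?thesis by (simp add: power2_eq_square algebra_simps)
  qed
  finally have "(2 * d1 * d2)^2 \<le> (a * q2 + c * q1)^2" .
  then have "\<bar>2 * d1 * d2\<bar> \<le> \<bar>a * q2 + c * q1\<bar>" by (simp add: abs_le_square_iff)
  then have "2 * d1 * d2 \<le> a * q2 + c * q1" using assms by simp
  then show ?thesis using assms(1,2) by (simp add: power2_eq_square algebra_simps)
qed

lemma enn2real_add: "X < \<infinity> \<Longrightarrow> Y < \<infinity> \<Longrightarrow> enn2real (X + Y) = enn2real X + enn2real (Y::ennreal)"
  by (cases X rule: ennreal_cases; cases Y rule: ennreal_cases) (auto simp: ennreal_plus[symmetric] simp del: ennreal_plus)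
lemma enn_sum_le1:
  assumes "X + Y \<le> (1::ennreal)"
  shows "X < \<infinity>" "Y < \<infinity>" "enn2real X + enn2real Y \<le> 1"
proof -
  have "X \<le> X + Y" "Y \<le> X + Y" by simp_all
  then have "X \<le> 1" "Y \<le> 1" using assms by (meson order_trans)+
  then show X: "X < \<infinity>" and Y: "Y < \<infinity>" by (auto simp: le_less_trans[OF _ ennreal_one_less_top])
  have "enn2real (X + Y) \<le> enn2real 1" using assms by (intro enn2real_mono) auto
  then show "enn2real X + enn2real Y \<le> 1" using X Y by (simp add: enn2real_add)
qed

context rgraph begin

lemma E_clamp:
  assumes "u \<le> s" "s \<le> w"
  shows "E (\<lambda>v. max u (min s (f v))) + E (\<lambda>v. max s (min w (f v))) \<le> E f"
proof (rule E_add_le)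
  fix p q
  have "b p q * ((max u (min s (f p)) - max u (min s (f q)))^2 + (max s (min w (f p)) - max s (min w (f q)))^2)
        \<le> b p q * (f p - f q)^2"
    by (intro mult_left_mono clamp_ineq assms bnn)
  then show "b p q * (max u (min s (f p)) - max u (min s (f q)))\<^sup>2 +
    b p q * (max s (min w (f p)) - max s (min w (f q)))\<^sup>2 \<le> b p q * (f p - f q)\<^sup>2"
    by (simp add: distrib_left)
qed

lemma tri_aux:
  assumes f: "E f = 1" and xz: "f x \<le> f z" and a: "R x y < \<infinity>" and c: "R y z < \<infinity>"
  shows "(f z - f x)^2 \<le> enn2real (R x y) + enn2real (R y z)"
proof -
  define u where "u = f x"
  define w where "w = f z"
  define s where "s = max u (min w (f y))"
  have us: "u \<le> s" and sw: "s \<le> w" using xz unfolding s_def u_def w_def by auto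
  define g1 where "g1 v = max u (min s (f v))" for v
  define g2 where "g2 v = max s (min w (f v))" for v
  have "E g1 + E g2 \<le> 1" using E_clamp[OF us sw, of f] f unfolding g1_def g2_def by simp
  note q = enn_sum_le1[OF this]
  have v: "g1 x = u" "g1 y = s" "g2 y = s" "g2 z = w"
    using us sw unfolding g1_def g2_def s_def u_def w_def by (auto simp: max_def min_def)
  have 1: "(s - u)^2 \<le> enn2real (R x y) * enn2real (E g1)" using R3[OF a q(1)] v by simp
  have 2: "(w - s)^2 \<le> enn2real (R y z) * enn2real (E g2)" using R3[OF c q(2)] v by simp
  have "(f z - f x)^2 = ((s - u) + (w - s))^2" unfolding u_def w_def by simp
  also have "\<dots> \<le> (enn2real (R x y) + enn2real (R y z)) * (enn2real (E g1) + enn2real (E g2))"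
    by (rule cs_aux[OF 1 2]) auto
  also have "\<dots> \<le> (enn2real (R x y) + enn2real (R y z)) * 1"
    by (intro mult_left_mono q(3)) auto
  finally show ?thesis by simp
qed

lemma triangle: "R x z \<le> R x y + R y z"
proof (cases "R x y < \<infinity> \<and> R y z < \<infinity>")
  case False
  then have "R x y = \<infinity> \<or> R y z = \<infinity>" by (simp add: less_top[symmetric])
  then show ?thesis by auto
next
  case True
  then have a: "R x y < \<infinity>" and c: "R y z < \<infinity>" by auto
  show ?thesis
  proof (rule R_least)
    fix f assume f: "E f = 1"
    have "(f z - f x)^2 \<le> enn2real (R x y) + enn2real (R y z)"
    proof (cases "f x \<le> f z")
      case True then show ?thesis using tri_aux[OF f True a c] by simp
    next
      case False
      define f' where "f' v = (-1) * f v + 0" for v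
      have "E f' = ennreal ((-1)^2) * E f" unfolding f'_def by (rule E_scale)
      then have f': "E f' = 1" using f by simp
      have "f' x \<le> f' z" using False unfolding f'_def by simp
      from tri_aux[OF f' this a c] show ?thesis unfolding f'_def by (simp add: power2_commute)
    qed
    then have "ennreal ((f z - f x)^2) \<le> ennreal (enn2real (R x y) + enn2real (R y z))"
      by (rule ennreal_leI)
    also have "\<dots> = R x y + R y z" using a c by (simp add: ennreal_plus less_top)
    finally show "ennreal ((f z - f x)^2) \<le> R x y + R y z" .
  qed
qed

end


context rgraph begin

lemma path_single: "is_path b x x [x]" unfolding is_path_def by simp

lemma path_extend:
  assumes p: "is_path b x u p" and y: "y \<notin> set p" and uv: "0 < b u v" and vy: "v \<noteq> y"
  shows "\<exists>q. is_path b x v q \<and> y \<notin> set q"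
proof (cases "v \<in> set p")
  case True
  then obtain i where i: "i < length p" "p ! i = v" by (auto simp: in_set_conv_nth)
  define q where "q = take (Suc i) p"
  have "is_path b x v q"
    unfolding is_path_def
  proof (intro conjI allI impI)
    show "q \<noteq> []" using i p unfolding q_def is_path_def by auto
    show "hd q = x" using i p unfolding q_def is_path_def by (auto simp: hd_take)
    show "last q = v" using i unfolding q_def by (simp add: take_Suc_conv_app_nth)
    show "distinct q" using p unfolding q_def is_path_def by simp
    fix j assume "Suc j < length q"
    then show "0 < b (q ! j) (q ! Suc j)" using p i unfolding q_def is_path_def by auto
  qed
  moreover have "y \<notin> set q" using y unfolding q_def by (meson in_set_takeD)
  ultimately show ?thesis by blast
next
  case False
  define q where "q = p @ [v]"
  have "is_path b x v q"
    unfolding is_path_def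
  proof (intro conjI allI impI)
    show "q \<noteq> []" unfolding q_def by simp
    show "hd q = x" using p unfolding q_def is_path_def by simp
    show "last q = v" unfolding q_def by simp
    show "distinct q" using p False unfolding q_def is_path_def by simp
    fix j assume j: "Suc j < length q"
    show "0 < b (q ! j) (q ! Suc j)"
    proof (cases "Suc j < length p")
      case True then show ?thesis using p unfolding q_def is_path_def by (auto simp: nth_append)
    next
      case False
      then have "Suc j = length p" using j unfolding q_def by simp
      moreover have "p ! (length p - 1) = u" using p unfolding is_path_def by (metis last_conv_nth)
      ultimately have sj: "Suc j = length p" and pj: "p ! j = u" by (simp, metis diff_Suc_1)
      have "q ! j = u" unfolding q_def using sj pj by (simp add: nth_append)
      moreover have "q ! Suc j = v" unfolding q_def using sj by (simp add: nth_append)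
      ultimately have "q ! j = u" "q ! Suc j = v" by simp_all
      then show ?thesis using uv by simp
    qed
  qed
  moreover have "y \<notin> set q" using y vy unfolding q_def by simp
  ultimately show ?thesis by blast
qed

lemma glue_key:
  assumes xA: "x \<in> A" and yA: "y \<notin> A" and zA: "z \<notin> A"
    and cl: "\<And>u v. u \<in> A \<Longrightarrow> 0 < b u v \<Longrightarrow> v \<in> A \<or> v = y"
    and f1: "E f1 = 1" and f2: "E f2 = 1"
  shows "ennreal ((f1 y - f1 x)^2 + (f2 z - f2 y)^2) \<le> R x z"
proof -
  define d1 where "d1 = f1 y - f1 x"
  define d2 where "d2 = f2 z - f2 y"
  define D where "D = d1^2 + d2^2"
  define h where "h v = (if v \<in> A then d1 * (f1 v - f1 y) else d2 * (f2 v - f2 y))" for v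
  have "E h \<le> ennreal (d1^2) * E f1 + ennreal (d2^2) * E f2"
  proof (rule E_comb_le)
    fix u v
    show "b u v * (h u - h v)^2 \<le> d1^2 * (b u v * (f1 u - f1 v)^2) + d2^2 * (b u v * (f2 u - f2 v)^2)"
    proof (cases "b u v = 0")
      case True then show ?thesis by simp
    next
      case False
      then have buv: "0 < b u v" using bnn[of u v] by simp
      have "b u v * (h u - h v)^2 \<le> d1^2 * (b u v * (f1 u - f1 v)^2) \<or>
            b u v * (h u - h v)^2 \<le> d2^2 * (b u v * (f2 u - f2 v)^2)"
      proof -
        have e1: "b u v * (h u - h v)^2 = d1^2 * (b u v * (f1 u - f1 v)^2)" if "h u - h v = d1 * (f1 u - f1 v)"
          using that by (simp add: power_mult_distrib)
        have e2: "b u v * (h u - h v)^2 = d2^2 * (b u v * (f2 u - f2 v)^2)" if "h u - h v = d2 * (f2 u - f2 v)"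
          using that by (simp add: power_mult_distrib)
        consider "u \<in> A" "v \<in> A" | "u \<in> A" "v \<notin> A" | "u \<notin> A" "v \<in> A" | "u \<notin> A" "v \<notin> A" by blast
        then show ?thesis
        proof cases
          case 1
          then have "h u - h v = d1 * (f1 u - f1 v)" unfolding h_def by (simp add: right_diff_distrib)
          then have "b u v * (h u - h v)^2 = d1^2 * (b u v * (f1 u - f1 v)^2)" by (rule e1)
          then show ?thesis by (intro disjI1 eq_refl)
        next
          case 2
          then have "v = y" using cl buv by blast
          then have "h u - h v = d1 * (f1 u - f1 v)" using 2 unfolding h_def by simp
          then have "b u v * (h u - h v)^2 = d1^2 * (b u v * (f1 u - f1 v)^2)" by (rule e1)
          then show ?thesis by (intro disjI1 eq_refl)
        next
          case 3
          then have "u = y" using cl[of v u] buv bsym[of u v] by auto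
          then have "h u - h v = d1 * (f1 u - f1 v)" using 3 unfolding h_def by (simp add: right_diff_distrib)
          then have "b u v * (h u - h v)^2 = d1^2 * (b u v * (f1 u - f1 v)^2)" by (rule e1)
          then show ?thesis by (intro disjI1 eq_refl)
        next
          case 4
          then have "h u - h v = d2 * (f2 u - f2 v)" unfolding h_def by (simp add: right_diff_distrib)
          then have "b u v * (h u - h v)^2 = d2^2 * (b u v * (f2 u - f2 v)^2)" by (rule e2)
          then show ?thesis by (intro disjI2 eq_refl)
        qed
      qed
      moreover have "0 \<le> d1^2 * (b u v * (f1 u - f1 v)^2)" "0 \<le> d2^2 * (b u v * (f2 u - f2 v)^2)"
        using bnn[of u v] by simp_all
      ultimately show ?thesis by linarith
    qed
  qed simp_all
  then have Eh: "E h \<le> ennreal D" using f1 f2 unfolding D_def by (simp add: ennreal_plus)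
  have "h z - h x = d2 * d2 - d1 * (f1 x - f1 y)" using xA zA unfolding h_def d2_def by simp
  also have "\<dots> = D" unfolding D_def d1_def by (simp add: power2_eq_square algebra_simps)
  finally have hzx: "h z - h x = D" .
  show ?thesis
  proof (cases "R x z < \<infinity>")
    case False then show ?thesis by (simp add: less_top[symmetric])
  next
    case True
    have D0: "0 \<le> D" unfolding D_def by simp
    have Ehf: "E h < \<infinity>" using Eh by (simp add: le_less_trans)
    have "D^2 \<le> enn2real (R x z) * enn2real (E h)" using R3[OF True Ehf] hzx by simp
    also have "\<dots> \<le> enn2real (R x z) * D"
      by (intro mult_left_mono enn2real_leI Eh D0) simp
    finally have "D^2 \<le> enn2real (R x z) * D" .
    then have "D \<le> enn2real (R x z)"
    proof (cases "D = 0")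
      case False
      then have "0 < D" using D0 by simp
      moreover have "D * D \<le> enn2real (R x z) * D" using \<open>D^2 \<le> enn2real (R x z) * D\<close> by (simp add: power2_eq_square)
      ultimately show ?thesis by simp
    qed simp
    then have "ennreal D \<le> ennreal (enn2real (R x z))" by (rule ennreal_leI)
    also have "\<dots> = R x z" using True by simp
    finally have "ennreal D \<le> R x z" .

    then show ?thesis unfolding D_def d1_def d2_def .
  qed
qed

lemma glue:
  assumes yx: "y \<noteq> x" and yz: "y \<noteq> z" and P: "\<forall>p. is_path b x z p \<longrightarrow> y \<in> set p"
  shows "R x y + R y z \<le> R x z"
proof -
  define A where "A = {v. \<exists>p. is_path b x v p \<and> y \<notin> set p}"
  have xA: "x \<in> A" unfolding A_def using path_single[of x] yx by auto
  have yA: "y \<notin> A" unfolding A_def is_path_def by (auto dest: last_in_set)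
  have zA: "z \<notin> A" unfolding A_def using P by auto
  have cl: "v \<in> A \<or> v = y" if "u \<in> A" "0 < b u v" for u v
    using that path_extend unfolding A_def by blast
  define F where "F = {f. E f = (1::ennreal)}"
  have Fne: "F \<noteq> {}" unfolding F_def using ex_E1 by blast
  have key: "ennreal ((f1 y - f1 x)^2) + ennreal ((f2 z - f2 y)^2) \<le> R x z" if "f1 \<in> F" "f2 \<in> F" for f1 f2
  proof -
    have "E f1 = 1" "E f2 = 1" using that unfolding F_def by auto
    from glue_key[OF xA yA zA cl this] show ?thesis by (simp add: ennreal_plus)
  qed
  have "R x y + R y z = (SUP f1\<in>F. ennreal ((f1 y - f1 x)^2) + R y z)"
    unfolding resistance_def[of b x y] F_def[symmetric] by (rule ennreal_SUP_add_left[OF Fne, symmetric])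
  also have "\<dots> \<le> R x z"
  proof (rule SUP_least)
    fix f1 assume f1: "f1 \<in> F"
    have "ennreal ((f1 y - f1 x)^2) + R y z = (SUP f2\<in>F. ennreal ((f1 y - f1 x)^2) + ennreal ((f2 z - f2 y)^2))"
      unfolding resistance_def[of b y z] F_def[symmetric] by (rule ennreal_SUP_add_right[OF Fne])
    also have "\<dots> \<le> R x z" by (rule SUP_least) (use key f1 in auto)
    finally show "ennreal ((f1 y - f1 x)^2) + R y z \<le> R x z" .
  qed
  finally show ?thesis .
qed

end



fun Kseq :: "(nat \<Rightarrow> real) \<Rightarrow> (nat \<Rightarrow> real) \<Rightarrow> nat \<Rightarrow> real" where
  "Kseq Dd Bb 0 = 0"
| "Kseq Dd Bb (Suc j) = (sqrt (Dd j) + Dd j * Kseq Dd Bb j) / Bb j"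

context rgraph begin

lemma bsumm_bounded:
  assumes "\<And>w. \<bar>\<phi> w\<bar> \<le> M"
  shows "(\<lambda>w. b v w * \<phi> w) summable_on UNIV"
proof -
  have s1: "(\<lambda>w. (2 * M) * b v w) summable_on UNIV" using summable_on_cmult_right[OF bsumm[of v], of "2*M"] .
  have s2: "(\<lambda>w. b v w * (\<phi> w + M)) summable_on UNIV"
  proof (rule summable_on_comparison_test[OF s1])
    fix w
    have "\<phi> w + M \<le> 2 * M" "0 \<le> \<phi> w + M" using assms[of w] by auto
    then show "b v w * (\<phi> w + M) \<le> (2 * M) * b v w" "0 \<le> b v w * (\<phi> w + M)"
      using bnn[of v w] by (simp_all add: mult_left_mono mult.commute)
  qed
  have s3: "(\<lambda>w. (-M) * b v w) summable_on UNIV" using summable_on_cmult_right[OF bsumm[of v], of "-M"] .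
  have "(\<lambda>w. b v w * (\<phi> w + M) + (-M) * b v w) summable_on UNIV" by (rule summable_on_add[OF s2 s3])
  then show ?thesis by (simp add: algebra_simps)
qed

lemma path_bound:
  assumes p: "is_path b x z p"
  shows "R x z < \<infinity>"
proof -
  define n where "n = length p - 1"
  have lp: "0 < length p" using p unfolding is_path_def by simp
  have p0: "p ! 0 = x" using p unfolding is_path_def by (metis hd_conv_nth)
  have pn: "p ! n = z" using p unfolding is_path_def n_def by (metis last_conv_nth)
  define C where "C = (\<Sum>j<n. sqrt (1 / b (p ! j) (p ! Suc j)))"
  have "R x z \<le> ennreal (C^2)"
  proof (rule R_least)
    fix f assume f: "E f = 1"
    have dj: "\<bar>f (p ! Suc j) - f (p ! j)\<bar> \<le> sqrt (1 / b (p ! j) (p ! Suc j))" if "j < n" for j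
    proof -
      have "Suc j < length p" using that unfolding n_def by simp
      then have bj: "0 < b (p ! j) (p ! Suc j)" using p unfolding is_path_def by blast
      have "ennreal (b (p ! j) (p ! Suc j) * (f (p ! j) - f (p ! Suc j))^2) \<le> 1"
        using term_le_E[of "p ! j" "p ! Suc j" f] f by simp
      then have "b (p ! j) (p ! Suc j) * (f (p ! j) - f (p ! Suc j))^2 \<le> 1" by simp
      moreover have "(f (p ! Suc j) - f (p ! j))^2 = (f (p ! j) - f (p ! Suc j))^2" by (rule power2_commute)
      ultimately have "(f (p ! Suc j) - f (p ! j))^2 * b (p ! j) (p ! Suc j) \<le> 1" by (simp add: mult.commute)
      then have "(f (p ! Suc j) - f (p ! j))^2 \<le> 1 / b (p ! j) (p ! Suc j)"
        using bj by (simp add: pos_le_divide_eq)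
      then have "sqrt ((f (p ! Suc j) - f (p ! j))^2) \<le> sqrt (1 / b (p ! j) (p ! Suc j))"
        by (rule real_sqrt_le_mono)
      then show ?thesis by simp
    qed
    have "(\<Sum>j<n. f (p ! Suc j) - f (p ! j)) = f (p ! n) - f (p ! 0)"
      by (rule sum_lessThan_telescope[where f="\<lambda>j. f (p ! j)"])
    then have "f z - f x = (\<Sum>j<n. f (p ! Suc j) - f (p ! j))" using p0 pn by simp
    then have "\<bar>f z - f x\<bar> \<le> (\<Sum>j<n. \<bar>f (p ! Suc j) - f (p ! j)\<bar>)"
      by (simp add: sum_abs)
    also have "\<dots> \<le> C" unfolding C_def by (intro sum_mono dj) simp
    finally have "\<bar>f z - f x\<bar> \<le> C" .
    then have "\<bar>f z - f x\<bar>^2 \<le> C^2" by (rule power_mono) simp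
    then have "(f z - f x)^2 \<le> C^2" by simp
    then show "ennreal ((f z - f x)^2) \<le> ennreal (C^2)" by (rule ennreal_leI)
  qed
  then show ?thesis by (rule le_less_trans) simp
qed

lemma path_rev:
  assumes p: "is_path b x z p"
  shows "is_path b z x (rev p)"
  unfolding is_path_def
proof (intro conjI allI impI)
  show "rev p \<noteq> []" "hd (rev p) = z" "last (rev p) = x" "distinct (rev p)"
    using p unfolding is_path_def by (auto simp: hd_rev last_rev)
  fix j assume j: "Suc j < length (rev p)"
  define i where "i = length p - 2 - j"
  have i: "Suc i < length p" "Suc i = length p - 1 - j" using j unfolding i_def by auto
  have "rev p ! j = p ! Suc i" "rev p ! Suc j = p ! i" using j i unfolding i_def by (auto simp: rev_nth)
  moreover have "0 < b (p ! i) (p ! Suc i)" using p i(1) unfolding is_path_def by blast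
  ultimately show "0 < b (rev p ! j) (rev p ! Suc j)" by (simp add: bsym)
qed

end


context rgraph begin

lemma approx_harm:
  assumes bd: "\<And>w. 0 \<le> g w" "\<And>w. g w \<le> M"
    and Eg: "E g < \<infinity>" and vx: "v \<noteq> x" and vy: "v \<noteq> y"
    and opt: "\<And>h. E h < \<infinity> \<Longrightarrow> h x = g x \<Longrightarrow> h y = g y \<Longrightarrow> enn2real (E g) \<le> enn2real (E h) + \<epsilon>"
  shows "(\<Sum>\<^sub>\<infinity>w\<in>UNIV. b v w * (g v - g w))^2 \<le> \<epsilon> * deg v"
proof -
  define S where "S = (\<Sum>\<^sub>\<infinity>w\<in>UNIV. b v w * (g v - g w))"
  define D where "D = deg v"
  define N where "N = (\<Sum>\<^sub>\<infinity>w\<in>UNIV. b v w * (g v - g w)^2)"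
  have bdd1: "\<bar>g v - g w\<bar> \<le> M" for w
    unfolding abs_le_iff using bd(1)[of v] bd(2)[of v] bd(1)[of w] bd(2)[of w] by linarith
  have bdd2: "\<bar>(g v - g w)^2\<bar> \<le> M^2" for w
  proof -
    have "\<bar>g v - g w\<bar>^2 \<le> M^2" by (rule power_mono[OF bdd1]) simp
    then show ?thesis by simp
  qed
  have sS: "(\<lambda>w. b v w * (g v - g w)) summable_on UNIV" by (rule bsumm_bounded[OF bdd1])
  have sN: "(\<lambda>w. b v w * (g v - g w)^2) summable_on UNIV" by (rule bsumm_bounded[OF bdd2])
  have "S^2 \<le> \<epsilon> * D"
  proof (cases "D = 0")
    case True
    then have "b v w = 0" for w using b_le_deg[of v w] bnn[of v w] unfolding D_def by simp
    then have "S = 0" unfolding S_def by simp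
    then show ?thesis using True by simp
  next
    case False
    then have D: "0 < D" using deg_nn[of v] unfolding D_def by simp
    define lam where "lam = S / D"
    define h where "h = g(v := g v - lam)"
    have hx: "h x = g x" "h y = g y" using vx vy unfolding h_def by auto
    have hsN: "((\<lambda>w. b v w * (g v - g w)^2) has_sum N) UNIV" using sN unfolding N_def by simp
    have hsS: "((\<lambda>w. b v w * (g v - g w)) has_sum S) UNIV" using sS unfolding S_def by simp
    have hsD: "((\<lambda>w. b v w) has_sum D) UNIV" using bsumm[of v] unfolding D_def deg_def by simp
    define N' where "N' = N + (-2*lam) * S + lam^2 * D"
    have "((\<lambda>w. b v w * (g v - g w)^2 + (-2*lam) * (b v w * (g v - g w)) + lam^2 * b v w) has_sum N') UNIV"
      unfolding N'_def by (intro has_sum_add has_sum_cmult_right hsN hsS hsD)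
    moreover have "b v w * (g v - g w)^2 + (-2*lam) * (b v w * (g v - g w)) + lam^2 * b v w
       = b v w * (g v - lam - g w)^2" for w
      by (simp add: power2_eq_square algebra_simps)
    ultimately have hsN': "((\<lambda>w. b v w * (g v - lam - g w)^2) has_sum N') UNIV" by simp
    have "lam^2 * D = S^2 / D" "2 * lam * S = 2 * (S^2 / D)" unfolding lam_def using D by (simp_all add: power2_eq_square)
    then have N'eq: "N' = N - S^2 / D" unfolding N'_def by simp
    have N'nn: "0 \<le> N'"
      using has_sum_nonneg[OF hsN'] bnn by (simp add: mult_nonneg_nonneg)
    have Nnn: "0 \<le> N"
      using has_sum_nonneg[OF hsN] bnn by (simp add: mult_nonneg_nonneg)
    have "NSe h v = (\<Sum>\<^sub>\<infinity>w\<in>UNIV. ennreal (b v w * (g v - lam - g w)^2))"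
      unfolding NSe_def by (rule infsum_cong) (auto simp: h_def)
    also have "\<dots> = ennreal N'"
    proof -
      have s': "(\<lambda>w. b v w * (g v - lam - g w)^2) summable_on UNIV" using hsN' summable_on_def by blast
      have "(\<Sum>\<^sub>\<infinity>w\<in>UNIV. ennreal (b v w * (g v - lam - g w)^2)) = ennreal (\<Sum>\<^sub>\<infinity>w\<in>UNIV. b v w * (g v - lam - g w)^2)"
        by (rule ennreal_infsum_real[OF s']) (simp add: bnn)
      also have "(\<Sum>\<^sub>\<infinity>w\<in>UNIV. b v w * (g v - lam - g w)^2) = N'" by (rule infsumI[OF hsN'])
      finally show ?thesis .
    qed
    finally have NSh: "NSe h v = ennreal N'" .
    have NSg: "NSe g v = ennreal N"
      unfolding NSe_def N_def using ennreal_infsum_real[OF sN] bnn by simp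
    have TNh: "TN h v = TN g v" unfolding TN_def by (rule infsum_cong) (auto simp: h_def)
    define t where "t = TN g v / 2"
    have Eg': "E g = t + ennreal N" using E_split[of g v] NSg unfolding t_def by simp
    have Eh': "E h = t + ennreal N'" using E_split[of h v] NSh TNh unfolding t_def by simp
    have tfin: "t < \<infinity>" using Eg unfolding Eg' by simp
    have Ehfin: "E h < \<infinity>" using tfin unfolding Eh' by simp
    have "enn2real (E g) = enn2real t + N" using Eg' tfin Nnn by (simp add: enn2real_add)
    moreover have "enn2real (E h) = enn2real t + N'" using Eh' tfin N'nn by (simp add: enn2real_add)
    moreover have "enn2real (E g) \<le> enn2real (E h) + \<epsilon>" using opt[OF Ehfin hx] .
    ultimately have "S^2 / D \<le> \<epsilon>" unfolding N'eq by linarith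
    then show ?thesis using D by (simp add: divide_le_eq mult.commute)
  qed
  then show ?thesis unfolding S_def D_def .
qed

lemma chain:
  assumes q: "is_path b z x q" and yq: "y \<notin> set q"
    and bd: "\<And>w. 0 \<le> g w" "\<And>w. g w \<le> s" and gz: "g z = s" and Eg: "E g < \<infinity>" and eps: "0 \<le> \<epsilon>"
    and opt: "\<And>h. E h < \<infinity> \<Longrightarrow> h x = g x \<Longrightarrow> h y = g y \<Longrightarrow> enn2real (E g) \<le> enn2real (E h) + \<epsilon>"
  shows "j < length q \<Longrightarrow> s - g (q ! j) \<le> Kseq (\<lambda>i. deg (q ! i)) (\<lambda>i. b (q ! i) (q ! Suc i)) j * sqrt \<epsilon>"
proof (induction j)
  case 0
  have "q ! 0 = z" using q unfolding is_path_def by (metis hd_conv_nth)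
  then show ?case using gz by simp
next
  case (Suc j)
  define v where "v = q ! j"
  define w' where "w' = q ! Suc j"
  define Dv where "Dv = deg v"
  define B where "B = b v w'"
  define Kj where "Kj = Kseq (\<lambda>i. deg (q ! i)) (\<lambda>i. b (q ! i) (q ! Suc i)) j"
  have IH: "s - g v \<le> Kj * sqrt \<epsilon>" using Suc unfolding v_def Kj_def by simp
  have B: "0 < B" using q Suc.prems unfolding is_path_def B_def v_def w'_def by blast
  have s0: "0 \<le> s" using bd(1)[of z] gz by simp
  have lq: "q ! (length q - 1) = x" using q unfolding is_path_def by (metis last_conv_nth)
  have vx: "v \<noteq> x"
  proof
    assume "v = x"
    then have "q ! j = q ! (length q - 1)" using lq unfolding v_def by simp
    moreover have "distinct q" using q unfolding is_path_def by simp
    ultimately have "j = length q - 1" using Suc.prems by (simp add: nth_eq_iff_index_eq)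
    then show False using Suc.prems by simp
  qed
  have vy: "v \<noteq> y" using yq Suc.prems unfolding v_def by (metis Suc_lessD nth_mem)
  define S where "S = (\<Sum>\<^sub>\<infinity>w\<in>UNIV. b v w * (g v - g w))"
  have S2: "S^2 \<le> \<epsilon> * Dv" unfolding S_def Dv_def by (rule approx_harm[OF bd Eg vx vy opt])
  have "S \<le> sqrt (S^2)" by simp
  also have "\<dots> \<le> sqrt (\<epsilon> * Dv)" using S2 by (rule real_sqrt_le_mono)
  also have "\<dots> = sqrt \<epsilon> * sqrt Dv" by (simp add: real_sqrt_mult)
  finally have Sle: "S \<le> sqrt \<epsilon> * sqrt Dv" .
  define T' where "T' = (\<Sum>\<^sub>\<infinity>w\<in>UNIV. b v w * (s - g w))"
  have bdd: "\<bar>s - g w\<bar> \<le> s" for w using bd(1)[of w] bd(2)[of w] by simp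
  have sT: "(\<lambda>w. b v w * (s - g w)) summable_on UNIV" by (rule bsumm_bounded[OF bdd])
  have hsD: "((\<lambda>w. b v w) has_sum Dv) UNIV" using bsumm[of v] unfolding Dv_def deg_def by simp
  have "((\<lambda>w. (g v - s) * b v w + b v w * (s - g w)) has_sum ((g v - s) * Dv + T')) UNIV"
    unfolding T'_def by (intro has_sum_add has_sum_cmult_right hsD) (simp add: sT)
  moreover have "(g v - s) * b v w + b v w * (s - g w) = b v w * (g v - g w)" for w
    by (simp add: algebra_simps)
  ultimately have "((\<lambda>w. b v w * (g v - g w)) has_sum ((g v - s) * Dv + T')) UNIV" by simp
  then have Seq: "S = (g v - s) * Dv + T'" unfolding S_def by (rule infsumI)
  have "B * (s - g w') \<le> T'" unfolding T'_def B_def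
    by (rule infsum_single_le_real[where f="\<lambda>w. b v w * (s - g w)"]) (use sT bd bnn in auto)
  also have "T' = S + (s - g v) * Dv" using Seq by (simp add: algebra_simps)
  also have "(s - g v) * Dv \<le> Kj * sqrt \<epsilon> * Dv"
    using IH deg_nn[of v] unfolding Dv_def by (rule mult_right_mono)
  finally have "B * (s - g w') \<le> sqrt \<epsilon> * sqrt Dv + Kj * sqrt \<epsilon> * Dv" using Sle by linarith
  then have "s - g w' \<le> (sqrt \<epsilon> * sqrt Dv + Kj * sqrt \<epsilon> * Dv) / B"
    using B by (simp add: pos_le_divide_eq mult.commute)
  also have "\<dots> = Kseq (\<lambda>i. deg (q ! i)) (\<lambda>i. b (q ! i) (q ! Suc i)) (Suc j) * sqrt \<epsilon>"
    unfolding Kj_def B_def Dv_def v_def w'_def by (simp add: algebra_simps)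
  finally show ?case unfolding w'_def .
qed

end


lemma ra1:
  fixes a c s q1 q2 Q \<epsilon> :: real
  assumes a: "0 < a" and c: "0 < c" and h1: "s^2 \<le> a * q1" and h2: "(1 - s)^2 \<le> c * q2"
    and hq: "q1 + q2 \<le> Q" and hQ: "Q < 1 / (a + c) + \<epsilon>"
  shows "q1 \<le> s^2 / a + \<epsilon>" "((a + c) * s - a)^2 \<le> \<epsilon> * (a * c * (a + c))"
proof -
  have i1: "s^2 / a \<le> q1" using h1 a by (simp add: pos_divide_le_eq mult.commute)
  have i2: "(1 - s)^2 / c \<le> q2" using h2 c by (simp add: pos_divide_le_eq mult.commute)
  have id: "s^2 / a + (1 - s)^2 / c - 1 / (a + c) = ((a + c) * s - a)^2 / (a * c * (a + c))"
    using a c by (simp add: field_simps power2_eq_square)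
  have nn: "0 \<le> ((a + c) * s - a)^2 / (a * c * (a + c))" using a c by simp
  show "q1 \<le> s^2 / a + \<epsilon>" using i1 i2 id nn hq hQ by linarith
  have "((a + c) * s - a)^2 / (a * c * (a + c)) < \<epsilon>" using i1 i2 id hq hQ by linarith
  then show "((a + c) * s - a)^2 \<le> \<epsilon> * (a * c * (a + c))" using a c by (simp add: pos_divide_le_eq less_imp_le divide_less_eq)
qed


context rgraph begin

lemma enn_sum_leQ:
  assumes "X + Y \<le> ennreal Q" "0 \<le> Q"
  shows "X < \<infinity>" "Y < \<infinity>" "enn2real X + enn2real Y \<le> Q"
proof -
  have "X \<le> X + Y" "Y \<le> X + Y" by simp_all
  then have "X \<le> ennreal Q" "Y \<le> ennreal Q" using assms by (meson order_trans)+
  then show X: "X < \<infinity>" and Y: "Y < \<infinity>" by (auto simp: le_less_trans[OF _ ennreal_less_top])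
  have "enn2real (X + Y) \<le> enn2real (ennreal Q)" using assms by (intro enn2real_mono) auto
  then show "enn2real X + enn2real Y \<le> Q" using X Y assms(2) by (simp add: enn2real_add)
qed

lemma strict:
  assumes p: "is_path b x z p" and yp: "y \<notin> set p"
  shows "R x z \<noteq> R x y + R y z"
proof
  assume eq: "R x z = R x y + R y z"
  have rfin: "R x z < \<infinity>" by (rule path_bound[OF p])
  have xy: "x \<noteq> y" using p yp unfolding is_path_def by (metis hd_in_set)
  have afin: "R x y < \<infinity>" and cfin: "R y z < \<infinity>" using rfin unfolding eq by simp_all
  define a where "a = enn2real (R x y)"
  define c where "c = enn2real (R y z)"
  have zy: "z \<noteq> y" using p yp unfolding is_path_def by (metis last_in_set)
  have a: "0 < a" unfolding a_def using R_pos[OF xy] afin by (simp add: enn2real_positive_iff)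
  have c: "0 < c" unfolding c_def using R_pos[of y z] zy afin cfin by (simp add: enn2real_positive_iff)
  define r where "r = a + c"
  have "ennreal r = ennreal (enn2real (R x y)) + ennreal (enn2real (R y z))"
    unfolding r_def a_def c_def by (rule ennreal_plus) simp_all
  then have Rr: "R x z = ennreal r" unfolding eq using afin cfin by simp
  define q where "q = rev p"
  have q: "is_path b z x q" unfolding q_def by (rule path_rev[OF p])
  have yq: "y \<notin> set q" using yp unfolding q_def by simp
  define K where "K = Kseq (\<lambda>i. deg (q ! i)) (\<lambda>i. b (q ! i) (q ! Suc i)) (length q - 1)"
  define \<epsilon> where "\<epsilon> = min (a / (8 * c * (a + c))) ((a / (2 * (a + c) * (\<bar>K\<bar> + 1)))^2)"
  have eps: "0 < \<epsilon>" unfolding \<epsilon>_def using a c by simp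
  define \<theta> where "\<theta> = 1 / (1 / r + \<epsilon>)"
  have r: "0 < r" unfolding r_def using a c by simp
  have "0 < 1 / r" using r by simp
  then have "0 < 1 / r + \<epsilon>" using eps by linarith
  then have th0: "0 < \<theta>" unfolding \<theta>_def by simp
  have thr: "\<theta> < r"
  proof -
    have e1: "0 < 1 + \<epsilon> * r" using r eps by (simp add: add_pos_pos)
    have "r < r * (1 + \<epsilon> * r)" using r eps by (simp add: algebra_simps)
    then have "r / (1 + \<epsilon> * r) < r" using e1 by (simp add: pos_divide_less_eq)
    moreover have "\<theta> = r / (1 + \<epsilon> * r)" unfolding \<theta>_def using r by (simp add: field_simps)
    ultimately show ?thesis by simp
  qed
  have "ennreal \<theta> < R x z" unfolding Rr using thr th0 by (simp add: ennreal_less_iff)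
  then obtain f where f: "E f = 1" and fth: "ennreal \<theta> < ennreal ((f z - f x)^2)"
    unfolding resistance_def by (auto simp: less_SUP_iff)
  define dd where "dd = f z - f x"
  have thd: "\<theta> < dd^2" using fth th0 unfolding dd_def by (simp add: ennreal_less_iff)
  then have dd: "dd \<noteq> 0" using th0 by auto
  define ft where "ft v = (1 / dd) * f v + (- f x / dd)" for v
  define Q where "Q = (1 / dd)^2"
  have "E ft = ennreal ((1/dd)^2) * E f" unfolding ft_def by (rule E_scale)
  then have Eft: "E ft = ennreal Q" unfolding Q_def by (simp only: f mult.right_neutral)
  have ftx: "ft x = 0" unfolding ft_def by simp
  have "ft z = (f z - f x) / dd" unfolding ft_def by (simp add: diff_divide_distrib)
  then have ftz: "ft z = 1" using dd unfolding dd_def by simp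
  have "Q = 1 / dd^2" unfolding Q_def by (simp add: power_divide)
  also have "\<dots> < 1 / \<theta>" using thd th0 by (simp add: frac_less2)
  also have "\<dots> = 1 / r + \<epsilon>" unfolding \<theta>_def by simp
  finally have hQ: "Q < 1 / (a + c) + \<epsilon>" unfolding r_def .
  define s where "s = max 0 (min 1 (ft y))"
  have s0: "0 \<le> s" and s1: "s \<le> 1" unfolding s_def by auto
  define g1 where "g1 v = max 0 (min s (ft v))" for v
  define g2 where "g2 v = max s (min 1 (ft v))" for v
  have "E g1 + E g2 \<le> ennreal Q" using E_clamp[OF s0 s1, of ft] Eft unfolding g1_def g2_def by simp
  moreover have Q0: "0 \<le> Q" unfolding Q_def by simp
  ultimately have qq: "E g1 < \<infinity>" "E g2 < \<infinity>" "enn2real (E g1) + enn2real (E g2) \<le> Q"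
    using enn_sum_leQ by blast+
  have v: "g1 x = 0" "g1 y = s" "g1 z = s" "g2 y = s" "g2 z = 1"
    using s0 s1 ftx ftz unfolding g1_def g2_def s_def by (auto simp: max_def min_def)
  define q1 where "q1 = enn2real (E g1)"
  define q2 where "q2 = enn2real (E g2)"
  have h1: "s^2 \<le> a * q1" using R3[OF afin qq(1)] v unfolding a_def q1_def by simp
  have h2: "(1 - s)^2 \<le> c * q2" using R3[OF cfin qq(2)] v unfolding c_def q2_def by simp
  have hq: "q1 + q2 \<le> Q" using qq(3) unfolding q1_def q2_def by simp
  note ra = ra1[OF a c h1 h2 hq hQ]
  have opt: "enn2real (E g1) \<le> enn2real (E h) + \<epsilon>"
    if "E h < \<infinity>" "h x = g1 x" "h y = g1 y" for h
  proof -
    have "s^2 \<le> a * enn2real (E h)" using R3[OF afin that(1)] that(2,3) v unfolding a_def by simp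
    then have "s^2 / a \<le> enn2real (E h)" using a by (simp add: pos_divide_le_eq mult.commute)
    then show ?thesis using ra(1) unfolding q1_def by linarith
  qed
  have bd: "0 \<le> g1 w" "g1 w \<le> s" for w unfolding g1_def using s0 by auto
  have lq: "0 < length q" using q unfolding is_path_def by simp
  have "s - g1 (q ! (length q - 1)) \<le> K * sqrt \<epsilon>" unfolding K_def
  proof (rule chain[where \<epsilon>=\<epsilon>, OF q yq bd v(3) qq(1)])
    show "0 \<le> \<epsilon>" using eps by simp
    show "enn2real (E g1) \<le> enn2real (E h) + \<epsilon>" if "E h < \<infinity>" "h x = g1 x" "h y = g1 y" for h
      using opt that by blast
    show "length q - 1 < length q" using lq by simp
  qed
  moreover have "q ! (length q - 1) = x" using q unfolding is_path_def by (metis last_conv_nth)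
  ultimately have sK: "s \<le> K * sqrt \<epsilon>" using v(1) by simp
  have sK1: "K * sqrt \<epsilon> \<le> (\<bar>K\<bar> + 1) * sqrt \<epsilon>" using eps by (intro mult_right_mono) auto
  have se: "sqrt \<epsilon> \<le> a / (2 * (a + c) * (\<bar>K\<bar> + 1))"
  proof -
    have "\<epsilon> \<le> (a / (2 * (a + c) * (\<bar>K\<bar> + 1)))^2" unfolding \<epsilon>_def by simp
    then have "sqrt \<epsilon> \<le> sqrt ((a / (2 * (a + c) * (\<bar>K\<bar> + 1)))^2)" by (rule real_sqrt_le_mono)
    also have "\<dots> = a / (2 * (a + c) * (\<bar>K\<bar> + 1))" using a c by simp
    finally show ?thesis .
  qed
  have k1: "0 < \<bar>K\<bar> + 1" by simp
  have ac: "0 < a + c" using a c by simp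
  have "(\<bar>K\<bar> + 1) * sqrt \<epsilon> \<le> (\<bar>K\<bar> + 1) * (a / (2 * (a + c) * (\<bar>K\<bar> + 1)))"
    using se k1 by (intro mult_left_mono) auto
  also have "\<dots> = a / (2 * (a + c))"
  proof -
    have gen: "kk * (aa / (dd' * kk)) = aa / dd'" if "kk \<noteq> 0" for kk aa dd' :: real
      using that by (cases "dd' = 0") (simp_all add: field_simps)
    show ?thesis using gen[of "\<bar>K\<bar> + 1" a "2 * (a + c)"] k1 by simp
  qed
  finally have "(\<bar>K\<bar> + 1) * sqrt \<epsilon> \<le> a / (2 * (a + c))" .
  then have "s \<le> a / (2 * (a + c))" using sK sK1 by linarith
  then have "(a + c) * s \<le> a / 2" using a c by (simp add: field_simps)
  then have "a / 2 \<le> a - (a + c) * s" by linarith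
  then have "(a / 2)^2 \<le> (a - (a + c) * s)^2" by (rule power_mono) (use a in simp)
  also have "\<dots> = ((a + c) * s - a)^2" by (rule power2_commute)
  also have "\<dots> \<le> \<epsilon> * (a * c * (a + c))" by (rule ra(2))
  also have "\<dots> \<le> (a / (8 * c * (a + c))) * (a * c * (a + c))"
    by (intro mult_right_mono) (use a c in \<open>simp_all add: \<epsilon>_def\<close>)
  also have "\<dots> = a^2 / 8"
  proof -
    have gen: "(aa / (8 * mm)) * (aa * mm) = aa^2 / 8" if "mm \<noteq> 0" for aa mm :: real
      using that by (simp add: field_simps power2_eq_square)
    have "c * (a + c) \<noteq> 0" using a c by simp
    from gen[OF this, of a] show ?thesis by (simp add: mult.assoc)
  qed
  finally have "(a / 2)^2 \<le> a^2 / 8" .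
  then show False using a by (simp add: power2_eq_square field_simps)
qed

end


theorem proposition3p2:
  fixes b :: "'a::countable \<Rightarrow> 'a \<Rightarrow> real" and x y z :: 'a
  assumes "is_graph b"
    and "\<exists>u v. 0 < b u v"
  shows "resistance b x z = resistance b x y + resistance b y z
     \<longleftrightarrow> (\<forall>p. is_path b x z p \<longrightarrow> y \<in> set p)"
proof -
  interpret rgraph b using assms by unfold_locales
  show ?thesis
  proof
    assume eq: "resistance b x z = resistance b x y + resistance b y z"
    show "\<forall>p. is_path b x z p \<longrightarrow> y \<in> set p"
    proof (intro allI impI)
      fix p assume p: "is_path b x z p"
      show "y \<in> set p"
      proof (rule ccontr)
        assume "y \<notin> set p"
        from strict[OF p this] eq show False by simp
      qed
    qed
  next
    assume P: "\<forall>p. is_path b x z p \<longrightarrow> y \<in> set p"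
    show "resistance b x z = resistance b x y + resistance b y z"
    proof (cases "y = x")
      case True then show ?thesis by (simp add: R_refl)
    next
      case yx: False
      show ?thesis
      proof (cases "y = z")
        case True then show ?thesis by (simp add: R_refl)
      next
        case False
        show ?thesis by (rule antisym[OF triangle glue[OF yx False P]])
      qed
    qed
  qed
qed

end
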